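(* Let $(\Theta,\mathcal H,\mathbb Q)$ be a probability space, let $g\in\mathcal H$ with $\mathbb Q(g)>0$, and let $\mathcal A$ and $\mathcal B$ be two $\mathbb Q$-independent sub-$\sigma$-fields of $\mathcal H$. Suppose that $\mathbb Q$-a.s. $\mathbb 1_g=AB$ for some $\mathcal A$-measurable $A:\Theta\to[0,\infty]$ and some $\mathcal B$-measurable $B:\Theta\to[0,\infty]$. Then there exist $a\in\mathcal A$ and $b\in\mathcal B$ such that $\mathbb Q$-a.s. $g=a\cap b$, and such $a$, $b$ are $\mathbb Q$-a.s. unique. *)

theory Defs
  imports "HOL-Probability.Probability"
begin

end

theory Submission
  imports Defs
begin

lemma (in prob_space) aux_sub:
  assumes "a \<in> events" "a' \<in> events" "b \<in> events"
    and ind: "prob ((a - a') \<inter> b) = prob (a - a') * prob b" and pb: "prob b > 0"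
    and ae: "AE x in M. x \<in> a \<and> x \<in> b \<longrightarrow> x \<in> a'"
  shows "AE x in M. x \<in> a \<longrightarrow> x \<in> a'"
proof -
  have "prob ((a - a') \<inter> b) = prob {}"
    by (rule finite_measure_eq_AE) (use ae assms in auto)
  then have "prob (a - a') = 0" using ind pb by simp
  then have "a - a' \<in> null_sets M"
    using assms by (simp add: null_sets_def emeasure_eq_measure)
  from AE_not_in[OF this] show ?thesis by eventually_elim auto
qed

theorem lemma2p1:
  fixes M F G :: "'a measure" and g :: "'a set"
    and A B :: "'a \<Rightarrow> ennreal"
  assumes "prob_space M"
    and "g \<in> sets M" and "measure M g > 0"
    and "subalgebra M F" and "subalgebra M G"
    and "prob_space.indep_set M (sets F) (sets G)"
    and "A \<in> borel_measurable F" and "B \<in> borel_measurable G"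
    and "AE x in M. indicator g x = A x * B x"
  shows "\<exists>a\<in>sets F. \<exists>b\<in>sets G. (AE x in M. (x \<in> g) = (x \<in> a \<inter> b)) \<and>
           (\<forall>a'\<in>sets F. \<forall>b'\<in>sets G. (AE x in M. (x \<in> g) = (x \<in> a' \<inter> b')) \<longrightarrow>
              (AE x in M. (x \<in> a) = (x \<in> a')) \<and> (AE x in M. (x \<in> b) = (x \<in> b')))"
proof -
  interpret P: prob_space M by fact
  have spF: "space F = space M" and sF: "sets F \<subseteq> sets M"
    using assms(4) by (auto simp: subalgebra_def)
  have spG: "space G = space M" and sG: "sets G \<subseteq> sets M"
    using assms(5) by (auto simp: subalgebra_def)
  have ind: "\<And>a b. a \<in> sets F \<Longrightarrow> b \<in> sets G \<Longrightarrow> P.prob (a \<inter> b) = P.prob a * P.prob b"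
    using P.indep_setD[OF assms(6)] by blast
  define a where "a = {x \<in> space F. A x \<noteq> 0}"
  define b where "b = {x \<in> space G. B x \<noteq> 0}"
  have aF: "a \<in> sets F" unfolding a_def using assms(7) by measurable
  have bG: "b \<in> sets G" unfolding b_def using assms(8) by measurable
  have ex: "AE x in M. (x \<in> g) = (x \<in> a \<inter> b)"
    using assms(9)
  proof eventually_elim
    case (elim x)
    show ?case
    proof (cases "x \<in> space M")
      case True
      then show ?thesis using elim spF spG
        by (cases "x \<in> g") (auto simp: a_def b_def indicator_def)
    next
      case False
      then show ?thesis using sets.sets_into_space[OF assms(2)] spF spG
        by (auto simp: a_def b_def)
    qed
  qed
  have uniq: "(AE x in M. (x \<in> a) = (x \<in> a')) \<and> (AE x in M. (x \<in> b) = (x \<in> b'))"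
    if a': "a' \<in> sets F" and b': "b' \<in> sets G" and h: "AE x in M. (x \<in> g) = (x \<in> a' \<inter> b')"
    for a' b'
  proof -
    have eqab: "AE x in M. (x \<in> a \<inter> b) = (x \<in> a' \<inter> b')" using ex h by eventually_elim auto
    have "P.prob g = P.prob (a \<inter> b)"
      by (rule P.finite_measure_eq_AE) (use ex assms(2) aF bG sF sG in auto)
    then have pos: "P.prob a * P.prob b > 0" using ind[OF aF bG] assms(3) by simp
    have "P.prob g = P.prob (a' \<inter> b')"
      by (rule P.finite_measure_eq_AE) (use h assms(2) a' b' sF sG in auto)
    then have pos': "P.prob a' * P.prob b' > 0" using ind[OF a' b'] assms(3) by simp
    have pa: "P.prob a > 0" and pb: "P.prob b > 0" using pos
      by (metis measure_nonneg mult_eq_0_iff order_less_le)+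
    have pa': "P.prob a' > 0" and pb': "P.prob b' > 0" using pos'
      by (metis measure_nonneg mult_eq_0_iff order_less_le)+
    have ev: "a \<in> P.events" "b \<in> P.events" "a' \<in> P.events" "b' \<in> P.events"
      using aF bG a' b' sF sG by auto
    have s1: "AE x in M. x \<in> a \<longrightarrow> x \<in> a'"
      by (rule P.aux_sub[OF ev(1) ev(3) ev(2) ind pb]) (use aF a' bG eqab in auto)
    have s2: "AE x in M. x \<in> a' \<longrightarrow> x \<in> a"
      by (rule P.aux_sub[OF ev(3) ev(1) ev(4) ind pb']) (use aF a' b' eqab in auto)
    have s3: "AE x in M. x \<in> b \<longrightarrow> x \<in> b'"
      by (rule P.aux_sub[OF ev(2) ev(4) ev(1)])
         (use aF a' bG b' eqab pa in \<open>auto simp: Int_commute ind\<close>)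
    have s4: "AE x in M. x \<in> b' \<longrightarrow> x \<in> b"
      by (rule P.aux_sub[OF ev(4) ev(2) ev(3)])
         (use aF a' bG b' eqab pa' in \<open>auto simp: Int_commute ind\<close>)
    show ?thesis using s1 s2 s3 s4 by (auto elim: AE_mp)
  qed
  show ?thesis using aF bG ex uniq by blast
qed

end
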